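(* Let $R>0$, let $E\subset\mathbb{R}^d$ be a body and let $a\in\partial\,co_R(E)\setminus E$. Then there exists an open ball $B$ of radius $R$ that $R$-supports $co_R(E)$ at $a$ (i.e. $a\in\partial B$, $B\cap co_R(E)=\emptyset$). Moreover, for such a ball $B$, assumed after translation to be centered at the origin $o$, with $S=\partial B$: (i) $\partial E\cap S$ contains at least two points; (ii) letting $F=\{\lambda x:\lambda\ge0,\ x\in\partial E\cap S\}$ and $C=co(F)$, if $C$ is pointed ($C\cap(-C)=\{o\}$), then there exist distinct points $x_1,\dots,x_s\in\partial E\cap S$, with $2\le s\le d$, such that $$a\in co^S_{sph}(\{x_1,\dots,x_s\}).$$
   Context: A body is a nonempty closed subset of $\mathbb{R}^d$; $co(\cdot)$ denotes convex hull. Fix $R>0$. The $R$-hulloid of a body $E$ is $co_R(E)=\bigcap\{\mathbb{R}^d\setminus B : B \text{ an open ball of radius } R,\ B\cap E=\emptyset\}$ (equal to $\mathbb{R}^d$ if no such ball exists). For a sphere $S$ centered at $o$ and $\mathcal K\subset S$, with $K=\{\lambda v:\lambda\ge0,\ v\in\mathcal K\}$, the spherical convex hull is $co^S_{sph}(\mathcal K)=co(K)\cap S$. *)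

theory Defs
  imports "HOL-Analysis.Analysis"
begin

definition body :: "'a::euclidean_space set \<Rightarrow> bool" where
  "body E \<longleftrightarrow> E \<noteq> {} \<and> closed E"

definition coR :: "real \<Rightarrow> 'a::euclidean_space set \<Rightarrow> 'a set" where
  "coR R E = \<Inter> {- ball c R | c. ball c R \<inter> E = {}}"

definition cone_at :: "'a::euclidean_space \<Rightarrow> 'a set \<Rightarrow> 'a set" where
  "cone_at p K = {p + l *\<^sub>R (v - p) | l v. l \<ge> 0 \<and> v \<in> K}"

text \<open>Spherical convex hull of K on the sphere of centre p and radius R
  (translated so that p plays the role of the origin).\<close>
definition co_sph :: "'a::euclidean_space \<Rightarrow> real \<Rightarrow> 'a set \<Rightarrow> 'a set" where
  "co_sph p R K = convex hull (cone_at p K) \<inter> sphere p R"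

definition pointed_at :: "'a::euclidean_space \<Rightarrow> 'a set \<Rightarrow> bool" where
  "pointed_at p C \<longleftrightarrow> C \<inter> (\<lambda>y. 2 *\<^sub>R p - y) ` C = {p}"

end

theory Submission
  imports Defs
begin


lemma coR_mem: "y \<in> coR R E \<longleftrightarrow> (\<forall>c. ball c R \<inter> E = {} \<longrightarrow> y \<notin> ball c R)"
  unfolding coR_def by blast

lemma coR_sub:
  assumes "ball c R \<inter> E = {}" shows "coR R E \<subseteq> - ball c R"
  unfolding coR_def by (rule Inter_lower) (use assms in blast)

lemma closed_coR: "closed (coR R E)"
  unfolding coR_def by (rule closed_Inter) auto

lemma E_sub_coR: "E \<subseteq> coR R E"
  unfolding coR_def by auto

lemma norm_shift_sq:
  fixes x c u :: "'a::real_inner"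
  shows "norm (x - (c + e *\<^sub>R u))^2 = norm (x - c)^2 - 2*e*(u \<bullet> (x-c)) + e^2 * norm u ^2"
  unfolding power2_norm_eq_inner
  by (simp add: inner_diff_left inner_diff_right inner_add_left inner_add_right
      algebra_simps inner_commute power2_eq_square)

lemma compact_gap:
  fixes g :: "'a::topological_space \<Rightarrow> real"
  assumes "compact S" "\<forall>y\<in>S. R < g y" "continuous_on S g"
  shows "\<exists>\<eta>>0. \<forall>y\<in>S. R + \<eta> \<le> g y"
proof (cases "S = {}")
  case True then show ?thesis by (intro exI[of _ 1]) auto
next
  case False
  then obtain y0 where "y0 \<in> S" "\<forall>y\<in>S. g y0 \<le> g y"
    using continuous_attains_inf[OF assms(1) False assms(3)] by blast
  then show ?thesis using assms(2) by (intro exI[of _ "g y0 - R"]) auto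
qed

lemma perturb:
  fixes E :: "'a::euclidean_space set"
  assumes R: "R > 0" and cE: "closed E" and aC: "a \<in> coR R E" and ac: "dist c a = R"
    and bE: "ball c R \<inter> E = {}" and ua: "u \<bullet> (a - c) > 0"
    and uK: "\<forall>x\<in>E \<inter> sphere c R. u \<bullet> (x - c) < 0"
  shows False
proof -
  define K where "K = E \<inter> sphere c R"
  have cK: "compact K" unfolding K_def using cE by (simp add: closed_Int_compact)
  obtain \<delta> where d0: "\<delta> > 0" and dK: "\<forall>x\<in>K. u \<bullet> (x - c) \<le> - \<delta>"
  proof (cases "K = {}")
    case True then show ?thesis using that[of 1] by auto
  next
    case False
    have "continuous_on K (\<lambda>x. u \<bullet> (x - c))" by (intro continuous_intros)
    then obtain x0 where "x0 \<in> K" "\<forall>y\<in>K. u \<bullet> (y - c) \<le> u \<bullet> (x0 - c)"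
      using continuous_attains_sup[OF cK False] by blast
    then show ?thesis using that[of "- (u \<bullet> (x0 - c))"] uK unfolding K_def by force
  qed
  define U where "U = {x. u \<bullet> x < u \<bullet> c - \<delta>/2}"
  have oU: "open U" unfolding U_def by (rule open_halfspace_lt)
  have U_iff: "x \<in> U \<longleftrightarrow> u \<bullet> (x - c) < - \<delta>/2" for x
    unfolding U_def by (simp add: inner_diff_right) linarith
  define T2 where "T2 = (E \<inter> cball c (R+1)) - U"
  have cT2: "compact T2" unfolding T2_def
    by (intro compact_diff oU) (simp add: cE closed_Int_compact)
  have T2gt: "\<forall>y\<in>T2. R < dist c y"
  proof
    fix y assume y: "y \<in> T2"
    then have "y \<in> E" "y \<notin> U" unfolding T2_def by auto
    then have "dist c y \<ge> R" using bE by (metis IntI empty_iff mem_ball linorder_not_less)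
    moreover have "dist c y \<noteq> R"
    proof
      assume "dist c y = R"
      then have "y \<in> K" using \<open>y \<in> E\<close> unfolding K_def by auto
      then have "u \<bullet> (y - c) \<le> - \<delta>" using dK by auto
      then show False using \<open>y \<notin> U\<close> d0 U_iff by auto
    qed
    ultimately show "R < dist c y" by auto
  qed
  obtain \<eta> where e0: "\<eta> > 0" and eT: "\<forall>y\<in>T2. R + \<eta> \<le> dist c y"
    using compact_gap[OF cT2 T2gt] continuous_on_dist[OF continuous_on_const continuous_on_id] by blast
  define \<eta>' where "\<eta>' = min \<eta> 1"
  have e'0: "\<eta>' > 0" using e0 unfolding \<eta>'_def by auto
  have far: "\<forall>y\<in>E - U. R + \<eta>' \<le> dist c y"
  proof
    fix y assume y: "y \<in> E - U"
    show "R + \<eta>' \<le> dist c y"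
    proof (cases "dist c y \<le> R + 1")
      case True then have "y \<in> T2" using y unfolding T2_def by auto
      then show ?thesis using eT unfolding \<eta>'_def by force
    next
      case False then show ?thesis unfolding \<eta>'_def by auto
    qed
  qed
  define \<epsilon> where "\<epsilon> = min (\<eta>' / (2 * (norm u + 1))) ((u \<bullet> (a - c)) / (norm u ^ 2 + 1))"
  have eps0: "\<epsilon> > 0" unfolding \<epsilon>_def using e'0 ua by (auto intro!: divide_pos_pos add_nonneg_pos)
  have epsu: "\<epsilon> * norm u < \<eta>'"
  proof -
    have "\<epsilon> * norm u \<le> (\<eta>' / (2 * (norm u + 1))) * norm u"
      unfolding \<epsilon>_def by (intro mult_right_mono) auto
    also have "\<dots> = \<eta>' * (norm u / (2 * (norm u + 1)))" by simp
    also have "norm u / (2 * (norm u + 1)) < 1"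
      by (simp add: divide_less_eq) (smt (verit) norm_ge_zero)
    then have "\<eta>' * (norm u / (2 * (norm u + 1))) < \<eta>' * 1"
      using e'0 by (intro mult_strict_left_mono) auto
    finally show ?thesis by simp
  qed
  have epsu2: "\<epsilon> * norm u ^ 2 < 2 * (u \<bullet> (a - c))"
  proof -
    have "\<epsilon> * norm u ^ 2 \<le> ((u \<bullet> (a - c)) / (norm u ^ 2 + 1)) * norm u ^ 2"
      unfolding \<epsilon>_def by (intro mult_right_mono) auto
    also have "\<dots> = (u \<bullet> (a - c)) * (norm u ^ 2 / (norm u ^ 2 + 1))" by simp
    also have "norm u ^ 2 / (norm u ^ 2 + 1) < 1"
      by (simp add: divide_less_eq add_nonneg_pos)
    then have "(u \<bullet> (a - c)) * (norm u ^ 2 / (norm u ^ 2 + 1)) < (u \<bullet> (a - c)) * 1"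
      using ua by (intro mult_strict_left_mono) auto
    finally show ?thesis using ua by simp
  qed
  define c' where "c' = c + \<epsilon> *\<^sub>R u"
  have "ball c' R \<inter> E = {}"
  proof (rule ccontr)
    assume "ball c' R \<inter> E \<noteq> {}"
    then obtain y where y: "y \<in> E" "dist c' y < R" by auto
    show False
    proof (cases "y \<in> U")
      case True
      have "dist c y \<ge> R" using bE y by (metis IntI empty_iff mem_ball linorder_not_less)
      then have "norm (y - c)^2 \<ge> R^2" by (simp add: dist_norm norm_minus_commute R less_imp_le power_mono)
      moreover have "u \<bullet> (y - c) < - \<delta>/2" using True U_iff by auto
      have "2 * \<epsilon> * (u \<bullet> (y - c)) < 0"
        using \<open>u \<bullet> (y - c) < - \<delta>/2\<close> d0 eps0 by (simp add: mult_pos_neg)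
      moreover have "\<epsilon>^2 * norm u ^2 \<ge> 0" by simp
      ultimately have "norm (y - c')^2 > R^2"
        unfolding c'_def norm_shift_sq using \<open>norm (y - c)^2 \<ge> R^2\<close> by linarith
      moreover have "norm (y - c') < R" using y by (simp add: dist_norm norm_minus_commute)
      then have "norm (y - c')^2 < R^2" by (intro power_strict_mono) auto
      ultimately show False by linarith
    next
      case False
      then have "R + \<eta>' \<le> dist c y" using far y by auto
      moreover have "dist c y \<le> dist c c' + dist c' y" by (rule dist_triangle)
      moreover have "dist c c' = \<epsilon> * norm u" unfolding c'_def dist_norm using eps0 by simp
      ultimately show False using y epsu by linarith
    qed
  qed
  moreover have "a \<in> ball c' R"
  proof -
    have "norm (a - c) = R" using ac by (simp add: dist_norm norm_minus_commute)
    moreover have "\<epsilon> * (\<epsilon> * norm u ^ 2) < \<epsilon> * (2 * (u \<bullet> (a - c)))"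
      using mult_strict_left_mono[OF epsu2 eps0] .
    ultimately have "norm (a - c')^2 < R^2" unfolding c'_def norm_shift_sq
      by (simp add: power2_eq_square algebra_simps)
    have "norm (a - c') < R"
    proof (rule ccontr)
      assume "\<not> norm (a - c') < R"
      then have "R^2 \<le> norm (a - c')^2" using R by (intro power_mono) auto
      then show False using \<open>norm (a - c')^2 < R^2\<close> by linarith
    qed
    then show ?thesis by (simp add: dist_norm norm_minus_commute)
  qed
  ultimately show False using aC unfolding coR_mem by blast
qed


lemma sphere_inner:
  fixes A P :: "'a::real_inner"
  assumes "norm A = R" "norm P = R" "A \<noteq> P"
  shows "A \<bullet> P < R^2"
proof -
  have "0 < norm (A - P)^2" using assms(3) by simp
  also have "norm (A - P)^2 = A \<bullet> A - 2 * (A \<bullet> P) + P \<bullet> P"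
    unfolding power2_norm_eq_inner by (simp add: inner_diff_left inner_diff_right inner_commute)
  finally show ?thesis using assms(1,2) by (simp add: power2_norm_eq_inner[symmetric])
qed

lemma frontier_eq:
  fixes E :: "'a::euclidean_space set"
  assumes R: "R > 0" and cE: "closed E" and bE: "ball c R \<inter> E = {}"
  shows "frontier E \<inter> sphere c R = E \<inter> sphere c R"
proof
  show "frontier E \<inter> sphere c R \<subseteq> E \<inter> sphere c R"
    using frontier_subset_closed[OF cE] by blast
  show "E \<inter> sphere c R \<subseteq> frontier E \<inter> sphere c R"
  proof
    fix x assume x: "x \<in> E \<inter> sphere c R"
    have "x \<notin> interior E"
    proof
      assume xi: "x \<in> interior E"
      have "x \<in> closure (ball c R)" using x R by auto
      then have "interior E \<inter> closure (ball c R) \<noteq> {}" using xi by blast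
      then have "interior E \<inter> ball c R \<noteq> {}"
        using open_Int_closure_eq_empty[OF open_interior] by blast
      then show False using bE interior_subset by blast
    qed
    then show "x \<in> frontier E \<inter> sphere c R"
      using x closure_subset unfolding frontier_def by blast
  qed
qed


lemma exists_ball:
  fixes E :: "'a::euclidean_space set"
  assumes R: "R > 0" and fa: "a \<in> frontier (coR R E)"
  shows "\<exists>c. a \<in> sphere c R \<and> ball c R \<inter> coR R E = {}"
proof -
  have aC: "a \<in> coR R E" using fa frontier_subset_closed[OF closed_coR] by blast
  define Cs where "Cs = {c. ball c R \<inter> E = {}} \<inter> cball a (R+1)"
  have eqU: "{c. ball c R \<inter> E = {}} = - (\<Union>x\<in>E. ball x R)"
    by (auto simp: dist_commute)
  have "closed {c. ball c R \<inter> E = {}}" unfolding eqU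
    by (intro closed_Compl open_UN) auto
  then have cCs: "compact Cs" unfolding Cs_def by (simp add: closed_Int_compact)
  have "\<exists>c\<in>Cs. dist a c \<le> R"
  proof (rule ccontr)
    assume "\<not> ?thesis"
    then have gt: "\<forall>c\<in>Cs. R < dist a c" by auto
    obtain \<eta> where e0: "\<eta> > 0" and eT: "\<forall>c\<in>Cs. R + \<eta> \<le> dist a c"
      using compact_gap[OF cCs gt] continuous_on_dist[OF continuous_on_const continuous_on_id] by blast
    have "min \<eta> 1 > 0" using e0 by simp
    then obtain y where y: "y \<notin> coR R E" "dist a y < min \<eta> 1"
      using fa unfolding frontier_straddle by blast
    then obtain c where c: "ball c R \<inter> E = {}" "y \<in> ball c R" unfolding coR_mem by blast
    have "dist a c \<le> dist a y + dist y c" by (rule dist_triangle)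
    moreover have "dist y c < R" using c by (simp add: dist_commute)
    ultimately have "dist a c < min \<eta> 1 + R" using y by linarith
    then have "c \<in> Cs" using c unfolding Cs_def by (auto simp: dist_commute)
    then have "R + \<eta> \<le> dist a c" using eT by blast
    then show False using \<open>dist a c < min \<eta> 1 + R\<close> by linarith
  qed
  then obtain c where c: "ball c R \<inter> E = {}" "dist a c \<le> R" unfolding Cs_def by blast
  have "a \<notin> ball c R" using aC coR_sub[OF c(1)] by (simp add: subset_iff)
  then have "a \<in> sphere c R" using c(2) by (simp add: dist_commute)
  moreover have "ball c R \<inter> coR R E = {}" using coR_sub[OF c(1)] by blast
  ultimately show ?thesis by blast
qed


lemma pointed_cone:
  fixes K :: "'a::euclidean_space set"
  assumes pt: "pointed_at c (convex hull (cone_at c K))"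
    and z: "z \<in> convex hull (conic hull ((\<lambda>x. x - c) ` K))"
    and mz: "- z \<in> convex hull (conic hull ((\<lambda>x. x - c) ` K))"
  shows "z = 0"
proof -
  have ce: "cone_at c K = (\<lambda>x. c + x) ` (conic hull ((\<lambda>x. x - c) ` K))"
    unfolding cone_at_def conic_hull_explicit by force
  have CH: "convex hull (cone_at c K) = (\<lambda>x. c + x) ` (convex hull (conic hull ((\<lambda>x. x - c) ` K)))"
    unfolding ce by (rule convex_hull_translation)
  have "c + z \<in> convex hull (cone_at c K)" unfolding CH using z by blast
  moreover have "c + - z \<in> convex hull (cone_at c K)" unfolding CH using mz by blast
  then have "c + z \<in> (\<lambda>y. 2 *\<^sub>R c - y) ` (convex hull (cone_at c K))"
    by (intro image_eqI[of _ _ "c + - z"]) (auto simp: scaleR_2)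
  ultimately have "c + z \<in> {c}" using pt unfolding pointed_at_def by blast
  then show ?thesis by simp
qed


lemma zero_notin:
  fixes T :: "'a::euclidean_space set"
  assumes pt: "\<And>z. z \<in> convex hull (conic hull T) \<Longrightarrow> - z \<in> convex hull (conic hull T) \<Longrightarrow> z = 0"
    and T0: "0 \<notin> T"
  shows "0 \<notin> convex hull T"
proof
  assume "0 \<in> convex hull T"
  then obtain S u where S: "finite S" "S \<subseteq> T" "\<forall>x\<in>S. 0 \<le> u x" "sum u S = 1"
      "(\<Sum>v\<in>S. u v *\<^sub>R v) = 0"
    unfolding convex_hull_caratheodory by blast
  have "\<exists>y0\<in>S. u y0 > 0"
  proof (rule ccontr)
    assume "\<not> ?thesis"
    then have "\<forall>x\<in>S. u x = 0" using S(3) by force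
    then have "sum u S = 0" by simp
    then show False using S(4) by simp
  qed
  then obtain y0 where y0: "y0 \<in> S" "u y0 > 0" by blast
  define CC where "CC = convex hull (conic hull T)"
  have inCC: "l *\<^sub>R y \<in> CC" if "l \<ge> 0" "y \<in> T" for l y
  proof -
    have "l *\<^sub>R y \<in> conic hull T" unfolding conic_hull_explicit mem_Collect_eq
      using that by (intro exI[of _ l] exI[of _ y]) simp
    then show ?thesis unfolding CC_def by (rule hull_inc)
  qed
  define z where "z = u y0 *\<^sub>R y0"
  have zne: "z \<noteq> 0" unfolding z_def using y0 S(2) T0 by auto
  have zCC: "z \<in> CC" unfolding z_def using inCC y0 S(2) by auto
  have sz: "- z = (\<Sum>v\<in>S - {y0}. u v *\<^sub>R v)"
    using S(5) sum.remove[OF S(1) y0(1), of "\<lambda>v. u v *\<^sub>R v"] unfolding z_def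
    by (simp add: add_eq_0_iff)
  define \<sigma> where "\<sigma> = sum u (S - {y0})"
  have s0: "\<sigma> \<ge> 0" unfolding \<sigma>_def using S(3) by (intro sum_nonneg) auto
  have "- z \<in> CC"
  proof (cases "\<sigma> = 0")
    case True
    then have "\<forall>v\<in>S - {y0}. u v = 0"
      unfolding \<sigma>_def using S(1,3) by (subst (asm) sum_nonneg_eq_0_iff) auto
    then have "- z = 0" unfolding sz by simp
    then show ?thesis using zne by simp
  next
    case False
    then have sp: "\<sigma> > 0" using s0 by simp
    have "(\<Sum>v\<in>S - {y0}. (u v / \<sigma>) *\<^sub>R (\<sigma> *\<^sub>R v)) \<in> CC"
    proof (rule convex_sum)
      show "finite (S - {y0})" using S(1) by simp
      show "convex CC" unfolding CC_def by simp
      show "(\<Sum>i\<in>S - {y0}. u i / \<sigma>) = 1" using sp unfolding \<sigma>_def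
        by (simp add: sum_divide_distrib[symmetric])
      show "\<And>i. i \<in> S - {y0} \<Longrightarrow> 0 \<le> u i / \<sigma>" using S(3) sp by auto
      show "\<And>i. i \<in> S - {y0} \<Longrightarrow> \<sigma> *\<^sub>R i \<in> CC" using inCC s0 S(2) by auto
    qed
    moreover have "(\<Sum>v\<in>S - {y0}. (u v / \<sigma>) *\<^sub>R (\<sigma> *\<^sub>R v)) = - z"
      unfolding sz using sp by (intro sum.cong) auto
    ultimately show ?thesis by simp
  qed
  then show False using pt zCC zne unfolding CC_def by blast
qed



lemma final_step:
  fixes E :: "'a::euclidean_space set"
  assumes R: "R > 0" and fX: "finite X" and XK: "X \<subseteq> E \<inter> sphere c R" and aE: "a \<notin> E"
    and ac: "dist c a = R" and l0: "\<forall>x\<in>X. l x \<ge> 0"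
    and rep: "a - c = (\<Sum>x\<in>X. l x *\<^sub>R (x - c))"
  shows "2 \<le> card X \<and> a \<in> co_sph c R X"
proof
  show "2 \<le> card X"
  proof (rule ccontr)
    assume "\<not> 2 \<le> card X"
    then have "card X = 0 \<or> card X = 1" by linarith
    then show False
    proof
      assume "card X = 0"
      then have "X = {}" using fX by simp
      then have "a = c" using rep by simp
      then show False using ac R by simp
    next
      assume "card X = 1"
      then obtain x where X: "X = {x}" by (rule card_1_singletonE)
      then have ax: "a - c = l x *\<^sub>R (x - c)" using rep by simp
      have nx: "norm (x - c) = R" using XK X by (simp add: dist_norm norm_minus_commute)
      have na: "norm (a - c) = R" using ac by (simp add: dist_norm norm_minus_commute)
      have lx: "l x \<ge> 0" using l0 X by simp
      have "R = l x * R" using arg_cong[OF ax, of norm] nx na lx by simp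
      then have "l x = 1" using R by simp
      then have "a = x" using ax by (simp add: algebra_simps)
      then show False using aE XK X by simp
    qed
  qed
  then have n0: "card X > 0" by simp
  define n where "n = real (card X)"
  have n0': "n > 0" unfolding n_def using n0 by simp
  have "(\<Sum>x\<in>X. (1/n) *\<^sub>R (c + (n * l x) *\<^sub>R (x - c))) \<in> convex hull (cone_at c X)"
  proof (rule convex_sum)
    show "finite X" by fact
    show "convex (convex hull cone_at c X)" by simp
    show "(\<Sum>i\<in>X. 1 / n) = 1" unfolding n_def using n0 by simp
    show "\<And>i. i \<in> X \<Longrightarrow> 0 \<le> 1 / n" using n0' by simp
    show "\<And>i. i \<in> X \<Longrightarrow> c + (n * l i) *\<^sub>R (i - c) \<in> convex hull cone_at c X"
    proof -
      fix i assume i: "i \<in> X"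
      have "c + (n * l i) *\<^sub>R (i - c) \<in> cone_at c X"
        unfolding cone_at_def mem_Collect_eq using i l0 n0'
        by (intro exI[of _ "n * l i"] exI[of _ i]) simp
      then show "c + (n * l i) *\<^sub>R (i - c) \<in> convex hull cone_at c X" by (rule hull_inc)
    qed
  qed
  moreover have "(\<Sum>x\<in>X. (1/n) *\<^sub>R (c + (n * l x) *\<^sub>R (x - c))) = a"
  proof -
    have "(\<Sum>x\<in>X. (1/n) *\<^sub>R (c + (n * l x) *\<^sub>R (x - c)))
        = (\<Sum>x\<in>X. (1/n) *\<^sub>R c) + (\<Sum>x\<in>X. l x *\<^sub>R (x - c))"
      using n0' by (simp add: scaleR_add_right sum.distrib)
    also have "(\<Sum>x\<in>X. (1/n) *\<^sub>R c) = c" using n0' unfolding n_def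
      by (simp add: sum_constant_scaleR)
    finally show ?thesis using rep by (metis add.commute diff_add_cancel)
  qed
  moreover have "a \<in> sphere c R" using ac by simp
  ultimately show "a \<in> co_sph c R X" unfolding co_sph_def by simp
qed

lemma K_nonempty:
  fixes E :: "'a::euclidean_space set"
  assumes R: "R > 0" and cE: "closed E" and aC: "a \<in> coR R E" and ac: "dist c a = R"
    and bE: "ball c R \<inter> E = {}"
  shows "E \<inter> sphere c R \<noteq> {}"
proof
  assume e: "E \<inter> sphere c R = {}"
  have "(a - c) \<bullet> (a - c) > 0" using ac R by (auto simp: dist_norm)
  then show False using perturb[OF R cE aC ac bE, of "a - c"] e by blast
qed

lemma two_points:
  fixes E :: "'a::euclidean_space set"
  assumes R: "R > 0" and cE: "closed E" and aC: "a \<in> coR R E" and ac: "dist c a = R"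
    and bE: "ball c R \<inter> E = {}" and aE: "a \<notin> E"
  shows "\<exists>x y. x \<noteq> y \<and> x \<in> E \<inter> sphere c R \<and> y \<in> E \<inter> sphere c R"
proof (rule ccontr)
  assume no: "\<not> ?thesis"
  obtain p where p: "p \<in> E \<inter> sphere c R" using K_nonempty[OF R cE aC ac bE] by blast
  have Kp: "x = p" if "x \<in> E \<inter> sphere c R" for x using no p that by blast
  have na: "norm (a - c) = R" using ac by (simp add: dist_norm norm_minus_commute)
  have np: "norm (p - c) = R" using p by (simp add: dist_norm norm_minus_commute)
  have "a - c \<noteq> p - c" using aE p by auto
  then have lt: "(a - c) \<bullet> (p - c) < R^2" using sphere_inner na np by blast
  have eq: "a - p = (a - c) - (p - c)" by simp
  have AA: "(a - c) \<bullet> (a - c) = R^2" using na by (metis power2_norm_eq_inner)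
  have e1: "(a - p) \<bullet> (a - c) = (a - c) \<bullet> (a - c) - (p - c) \<bullet> (a - c)"
    unfolding eq by (rule inner_diff_left)
  have "(a - p) \<bullet> (a - c) = R^2 - (a - c) \<bullet> (p - c)"
    using e1 AA inner_commute[of "p - c" "a - c"] by linarith
  then have u1: "(a - p) \<bullet> (a - c) > 0" using lt by simp
  have PP: "(p - c) \<bullet> (p - c) = R^2" using np by (metis power2_norm_eq_inner)
  have e2: "(a - p) \<bullet> (p - c) = (a - c) \<bullet> (p - c) - (p - c) \<bullet> (p - c)"
    unfolding eq by (rule inner_diff_left)
  have "(a - p) \<bullet> (p - c) = (a - c) \<bullet> (p - c) - R^2"
    using e2 PP by linarith
  then have pn: "(a - p) \<bullet> (p - c) < 0" using lt by simp
  have u2: "\<forall>x\<in>E \<inter> sphere c R. (a - p) \<bullet> (x - c) < 0"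
  proof
    fix x assume "x \<in> E \<inter> sphere c R"
    then have "x = p" by (rule Kp)
    then show "(a - p) \<bullet> (x - c) < 0" using pn by simp
  qed
  show False using perturb[OF R cE aC ac bE u1 u2] .
qed



lemma part_ii:
  fixes E :: "'a::euclidean_space set"
  assumes R: "R > 0" and cE: "closed E" and aC: "a \<in> coR R E" and ac: "dist c a = R"
    and bE: "ball c R \<inter> E = {}" and aE: "a \<notin> E"
    and pt: "pointed_at c (convex hull (cone_at c (E \<inter> sphere c R)))"
  shows "\<exists>X. finite X \<and> X \<subseteq> E \<inter> sphere c R \<and> 2 \<le> card X \<and> card X \<le> DIM('a) \<and> a \<in> co_sph c R X"
proof -
  define K where "K = E \<inter> sphere c R"
  define T where "T = (\<lambda>x. x - c) ` K"
  have pt': "pointed_at c (convex hull (cone_at c K))" using pt unfolding K_def .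
  have cK: "compact K" unfolding K_def using cE by (simp add: closed_Int_compact)
  have Kne: "K \<noteq> {}" unfolding K_def by (rule K_nonempty[OF R cE aC ac bE])
  have cT: "compact T" unfolding T_def by (intro compact_continuous_image continuous_intros cK)
  have T0: "0 \<notin> T" unfolding T_def K_def using R by auto
  have pc: "z = 0" if "z \<in> convex hull (conic hull T)" "- z \<in> convex hull (conic hull T)" for z
    using that unfolding T_def by (rule pointed_cone[OF pt'])
  have h0: "0 \<notin> convex hull T" by (rule zero_notin[OF pc T0])
  obtain w0 b0 where w0: "w0 \<noteq> 0" and b0: "0 < b0" and wb: "\<forall>x\<in>convex hull T. w0 \<bullet> x > b0"
    using separating_hyperplane_closed_0[OF convex_convex_hull compact_imp_closed[OF compact_convex_hull[OF cT]] h0]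
    by blast
  define s where "s x = w0 \<bullet> (x - c)" for x
  have sK: "s x > b0" if "x \<in> K" for x
  proof -
    have "x - c \<in> T" unfolding T_def using that by (rule imageI)
    then have "x - c \<in> convex hull T" by (rule hull_inc)
    then show ?thesis unfolding s_def using wb by blast
  qed
  define \<phi> where "\<phi> x = (1 / s x) *\<^sub>R (x - c)" for x
  have \<phi>w: "w0 \<bullet> \<phi> x = 1" if "x \<in> K" for x
    using sK[OF that] b0 unfolding \<phi>_def s_def by simp
  have x\<phi>: "x - c = s x *\<^sub>R \<phi> x" if "x \<in> K" for x
    using sK[OF that] b0 unfolding \<phi>_def by simp
  define P where "P = \<phi> ` K"
  have "continuous_on K \<phi>" unfolding \<phi>_def s_def
    by (intro continuous_intros) (use b0 in \<open>auto dest!: sK simp: s_def\<close>)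
  then have cP: "compact P" unfolding P_def by (rule compact_continuous_image[OF _ cK])
  have Pne: "P \<noteq> {}" unfolding P_def using Kne by simp
  have hP: "convex hull P \<subseteq> {y. w0 \<bullet> y = 1}"
  proof (rule hull_minimal)
    show "P \<subseteq> {y. w0 \<bullet> y = 1}" unfolding P_def using \<phi>w by auto
    show "convex {y. w0 \<bullet> y = 1}" by (rule convex_hyperplane)
  qed
  have hP0: "0 \<notin> convex hull P" using hP by auto
  define Q where "Q = conic hull (convex hull P)"
  have clQ: "closed Q" unfolding Q_def
    by (rule closed_conic_hull) (use compact_convex_hull[OF cP] hP0 in blast)
  have cvQ: "convex Q" unfolding Q_def by (intro convex_conic_hull convex_convex_hull)
  have cnQ: "conic Q" unfolding Q_def by (rule conic_conic_hull)
  have xQ: "x - c \<in> Q" if "x \<in> K" for x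
  proof -
    have "\<phi> x \<in> convex hull P" unfolding P_def using that by (intro hull_inc imageI)
    moreover have "s x \<ge> 0" using sK[OF that] b0 by simp
    ultimately show ?thesis unfolding Q_def conic_hull_explicit mem_Collect_eq using x\<phi>[OF that]
      by (intro exI[of _ "s x"] exI[of _ "\<phi> x"]) simp
  qed
  have Q0: "0 \<in> Q" unfolding Q_def using Pne by simp
  have aQ: "a - c \<in> Q"
  proof (rule ccontr)
    assume "a - c \<notin> Q"
    then obtain v b where v1: "v \<bullet> (a - c) < b" and v2: "\<forall>q\<in>Q. v \<bullet> q > b"
      using separating_hyperplane_closed_point[OF cvQ clQ] by blast
    have bneg: "b < 0" using v2 Q0 by force
    have vq: "v \<bullet> q \<ge> 0" if "q \<in> Q" for q
    proof (rule ccontr)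
      assume "\<not> v \<bullet> q \<ge> 0"
      then have neg: "v \<bullet> q < 0" by simp
      define t where "t = 2 * b / (v \<bullet> q)"
      have t0: "t \<ge> 0" unfolding t_def using neg bneg by (simp add: divide_nonpos_neg)
      have "t *\<^sub>R q \<in> Q" using cnQ that t0 by (rule conic_mul)
      then have "v \<bullet> (t *\<^sub>R q) > b" using v2 by blast
      moreover have "v \<bullet> (t *\<^sub>R q) = 2 * b" unfolding t_def using neg by simp
      ultimately show False using bneg by simp
    qed
    define \<delta> where "\<delta> = (- b) / (\<bar>w0 \<bullet> (a - c)\<bar> + 1)"
    have d0: "\<delta> > 0" unfolding \<delta>_def using bneg by (simp add: add_nonneg_pos divide_neg_pos)
    have dlt: "\<delta> * (w0 \<bullet> (a - c)) < - b"
    proof -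
      have "\<delta> * (w0 \<bullet> (a - c)) \<le> \<delta> * \<bar>w0 \<bullet> (a - c)\<bar>" using d0 by (intro mult_left_mono) auto
      also have "\<dots> = (- b) * (\<bar>w0 \<bullet> (a - c)\<bar> / (\<bar>w0 \<bullet> (a - c)\<bar> + 1))" unfolding \<delta>_def by simp
      also have "\<bar>w0 \<bullet> (a - c)\<bar> / (\<bar>w0 \<bullet> (a - c)\<bar> + 1) < 1" by simp
      then have "(- b) * (\<bar>w0 \<bullet> (a - c)\<bar> / (\<bar>w0 \<bullet> (a - c)\<bar> + 1)) < (- b) * 1"
        using bneg by (intro mult_strict_left_mono) auto
      finally show ?thesis by simp
    qed
    define u where "u = - v - \<delta> *\<^sub>R w0"
    have u1: "u \<bullet> (a - c) > 0" unfolding u_def using v1 dlt by (simp add: inner_diff_left)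
    have u2: "\<forall>x\<in>E \<inter> sphere c R. u \<bullet> (x - c) < 0"
    proof
      fix x assume x: "x \<in> E \<inter> sphere c R"
      then have xK: "x \<in> K" unfolding K_def .
      have "v \<bullet> (x - c) \<ge> 0" using vq[OF xQ[OF xK]] .
      moreover have "\<delta> * s x > 0" using d0 sK[OF xK] b0 by simp
      ultimately show "u \<bullet> (x - c) < 0" unfolding u_def s_def by (simp add: inner_diff_left)
    qed
    show False using perturb[OF R cE aC ac bE u1 u2] .
  qed
  obtain t p where tp: "a - c = t *\<^sub>R p" "t \<ge> 0" "p \<in> convex hull P"
    using aQ unfolding Q_def conic_hull_explicit by blast
  obtain S \<mu> where S: "finite S" "S \<subseteq> P" "card S \<le> aff_dim P + 1" "\<forall>x\<in>S. 0 \<le> \<mu> x"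
      "sum \<mu> S = 1" "(\<Sum>v\<in>S. \<mu> v *\<^sub>R v) = p"
    using tp(3) unfolding convex_hull_caratheodory_aff_dim by blast
  have "aff_dim P \<le> aff_dim {y. w0 \<bullet> y = 1}"
    by (rule aff_dim_subset) (use hull_subset[of P convex] hP in blast)
  also have "\<dots> = int DIM('a) - 1" using w0 by simp
  finally have cS: "card S \<le> DIM('a)" using S(3) by linarith
  define g where "g = inv_into K \<phi>"
  have gK: "g y \<in> K" if "y \<in> S" for y
    unfolding g_def using that S(2) unfolding P_def by (intro inv_into_into) blast
  have \<phi>g: "\<phi> (g y) = y" if "y \<in> S" for y
    unfolding g_def using that S(2) unfolding P_def by (intro f_inv_into_f) blast
  have ig: "inj_on g S" by (rule inj_on_inverseI[of _ \<phi>]) (rule \<phi>g)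
  define X where "X = g ` S"
  have fX: "finite X" unfolding X_def using S(1) by simp
  have XK: "X \<subseteq> K" unfolding X_def using gK by blast
  have cX: "card X \<le> DIM('a)" unfolding X_def using card_image_le[OF S(1), of g] cS by linarith
  define l where "l x = t * \<mu> (\<phi> x) / s x" for x
  have l0: "\<forall>x\<in>X. l x \<ge> 0"
  proof
    fix x assume x: "x \<in> X"
    then obtain y where y: "y \<in> S" "x = g y" unfolding X_def by blast
    then have "\<phi> x = y" using \<phi>g by simp
    then show "l x \<ge> 0" unfolding l_def using tp(2) S(4) y(1) sK[OF gK[OF y(1)]] b0 y(2)
      by (simp add: divide_nonneg_pos)
  qed
  have "(\<Sum>x\<in>X. l x *\<^sub>R (x - c)) = (\<Sum>y\<in>S. l (g y) *\<^sub>R (g y - c))"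
    unfolding X_def by (rule sum.reindex[OF ig, unfolded comp_def])
  also have "\<dots> = (\<Sum>y\<in>S. (t * \<mu> y) *\<^sub>R y)"
  proof (rule sum.cong[OF refl])
    fix y assume y: "y \<in> S"
    have sp: "s (g y) > 0" using sK[OF gK[OF y]] b0 by simp
    have "l (g y) *\<^sub>R (g y - c) = (t * \<mu> y / s (g y)) *\<^sub>R (s (g y) *\<^sub>R \<phi> (g y))"
      unfolding l_def using x\<phi>[OF gK[OF y]] \<phi>g[OF y] by simp
    also have "\<dots> = (t * \<mu> y) *\<^sub>R y" using sp \<phi>g[OF y] by simp
    finally show "l (g y) *\<^sub>R (g y - c) = (t * \<mu> y) *\<^sub>R y" .
  qed
  also have "\<dots> = t *\<^sub>R p" unfolding S(6)[symmetric] by (simp add: scaleR_sum_right)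
  finally have rep: "a - c = (\<Sum>x\<in>X. l x *\<^sub>R (x - c))" using tp(1) by simp
  have XK': "X \<subseteq> E \<inter> sphere c R" using XK unfolding K_def .
  have "2 \<le> card X \<and> a \<in> co_sph c R X" by (rule final_step[OF R fX XK' aE ac l0 rep])
  then show ?thesis using fX XK' cX by blast
qed


theorem mainTheorem4:
  fixes E :: "'a::euclidean_space set" and R :: real and a :: 'a
  assumes "R > 0" and "body E" and "a \<in> frontier (coR R E) - E"
  shows "(\<exists>c. a \<in> sphere c R \<and> ball c R \<inter> coR R E = {})
    \<and> (\<forall>c. a \<in> sphere c R \<and> ball c R \<inter> coR R E = {} \<longrightarrow>
          (\<exists>x y. x \<noteq> y \<and> x \<in> frontier E \<inter> sphere c R \<and> y \<in> frontier E \<inter> sphere c R)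
        \<and> (pointed_at c (convex hull (cone_at c (frontier E \<inter> sphere c R))) \<longrightarrow>
            (\<exists>X. finite X \<and> X \<subseteq> frontier E \<inter> sphere c R \<and> 2 \<le> card X \<and> card X \<le> DIM('a)
                 \<and> a \<in> co_sph c R X)))"
proof -
  have R: "R > 0" using assms(1) .
  have cE: "closed E" using assms(2) unfolding body_def by blast
  have fa: "a \<in> frontier (coR R E)" and aE: "a \<notin> E" using assms(3) by auto
  have aC: "a \<in> coR R E" using fa frontier_subset_closed[OF closed_coR] by blast
  have part1: "\<exists>c. a \<in> sphere c R \<and> ball c R \<inter> coR R E = {}" by (rule exists_ball[OF R fa])
  show ?thesis
  proof (intro conjI part1 allI impI)
    fix c assume c: "a \<in> sphere c R \<and> ball c R \<inter> coR R E = {}"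
    have ac: "dist c a = R" using c by simp
    have bE: "ball c R \<inter> E = {}" using c E_sub_coR[of E R] by blast
    have fe: "frontier E \<inter> sphere c R = E \<inter> sphere c R" by (rule frontier_eq[OF R cE bE])
    show "\<exists>x y. x \<noteq> y \<and> x \<in> frontier E \<inter> sphere c R \<and> y \<in> frontier E \<inter> sphere c R"
      unfolding fe by (rule two_points[OF R cE aC ac bE aE])
    assume pt: "pointed_at c (convex hull (cone_at c (frontier E \<inter> sphere c R)))"
    show "\<exists>X. finite X \<and> X \<subseteq> frontier E \<inter> sphere c R \<and> 2 \<le> card X \<and> card X \<le> DIM('a)
                 \<and> a \<in> co_sph c R X"
      unfolding fe by (rule part_ii[OF R cE aC ac bE aE pt[unfolded fe]])
  qed
qed

end
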